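(* For every integer $n\ge 1$, the Fermat number $F_n=2^{2^{n-1}}+1$ is primover to base $2$.
   Context: For an integer $a>1$ and an odd integer $n>1$ with $\gcd(a,n)=1$: $h_a(n)$ denotes the multiplicative order of $a$ modulo $n$. A cyclotomic coset of $a$ modulo $n$ is a set of the form $\{\, s a^j \bmod n : j\ge 0\,\}$ with $s\in\{1,\dots,n-1\}$; these cosets partition $\{1,\dots,n-1\}$, and $r_a(n)$ denotes the number of distinct cyclotomic cosets of $a$ modulo $n$. An odd composite number $n$ coprime to $a$ is called an overpseudoprime to base $a$ if $n=r_a(n)\,h_a(n)+1$. An integer $N>1$ is called primover to base $a$ if it is either prime or an overpseudoprime to base $a$. *)

theory Defs
  imports "HOL-Number_Theory.Number_Theory"
begin

definition h_ord :: "nat \<Rightarrow> nat \<Rightarrow> nat" where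
  "h_ord a n = ord n a"

definition cyc_coset :: "nat \<Rightarrow> nat \<Rightarrow> nat \<Rightarrow> nat set" where
  "cyc_coset a n s = {(s * a ^ j) mod n | j. True}"

definition r_cos :: "nat \<Rightarrow> nat \<Rightarrow> nat" where
  "r_cos a n = card (cyc_coset a n ` {1..n-1})"

definition overpseudoprime :: "nat \<Rightarrow> nat \<Rightarrow> bool" where
  "overpseudoprime a n \<longleftrightarrow> odd n \<and> n > 1 \<and> \<not> prime n \<and> coprime a n
     \<and> n = r_cos a n * h_ord a n + 1"

definition primover :: "nat \<Rightarrow> nat \<Rightarrow> bool" where
  "primover a N \<longleftrightarrow> N > 1 \<and> (prime N \<or> overpseudoprime a N)"

end

theory Submission
  imports Defs
begin

lemma ord_fermat_div:
  fixes m d :: nat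
  defines "K \<equiv> 2^m"
  assumes d: "d dvd 2^K + 1" "d > 1"
  shows "ord d 2 = 2*K"
proof -
  have oddN: "odd (2^K+1::nat)" by (simp add: K_def)
  hence oddd: "odd d" using d(1) dvd_trans by blast
  have e: "(2::nat)^(2*K) = (2^K - 1) * (2^K+1) + 1"
  proof -
    have "(2::nat)^K \<ge> 1" by simp
    moreover have "(2::nat)^(2*K) = 2^K * 2^K" by (simp add: power_mult power2_eq_square mult.commute)
    ultimately show ?thesis by (simp add: algebra_simps)
  qed
  have z: "[(2^K - 1) * (2^K+1) = 0] (mod d)"
    by (rule cong_0_iff[THEN iffD2]) (rule dvd_mult[OF d(1)])
  have "[(2^K - 1) * (2^K+1) + 1 = 0 + 1] (mod d)" by (rule cong_add[OF z cong_refl])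
  hence "[2^(2*K) = 1] (mod d)" unfolding e by simp
  hence "ord d 2 dvd 2*K" using ord_divides by blast
  hence "ord d 2 dvd 2^(Suc m)" by (simp add: K_def)
  then obtain i where i: "i \<le> Suc m" "ord d 2 = 2^i"
    using divides_primepow_nat[of 2 "ord d 2" "Suc m"] by (auto simp del: power_Suc)
  show ?thesis
  proof (cases "i = Suc m")
    case True then show ?thesis using i by (simp add: K_def)
  next
    case False
    hence "ord d (2::nat) dvd K" using i by (simp add: K_def le_imp_power_dvd)
    hence c1: "[2^K = 1] (mod d)" using ord_divides by blast
    have c2: "[2^K + 1 = 0] (mod d)" using d(1) by (simp add: cong_0_iff)
    have "[1 + 1 = 0] (mod d)" using cong_add[OF c1 cong_refl[of 1]] c2
      by (metis cong_sym cong_trans)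
    hence "d dvd 2" by (metis cong_0_iff one_add_one)
    hence "d \<le> 2" by (simp add: dvd_imp_le)
    with d(2) oddd show ?thesis by presburger
  qed
qed

lemma pow_cong_mod:
  fixes m d s i j :: nat
  defines "K \<equiv> 2^m"
  defines "N \<equiv> (2::nat)^K + 1"
  assumes "d dvd N" "d > 1"
  shows "[2^i = 2^j] (mod d) \<longleftrightarrow> [i = j] (mod (2*K))"
proof -
  have "odd N" by (simp add: N_def K_def)
  hence "odd d" using assms(3) dvd_trans by blast
  hence cop: "coprime d 2" by (simp add: coprime_commute)
  show ?thesis using order_divides_expdiff[OF cop] ord_fermat_div[of d m] assms
    by (simp add: K_def N_def)
qed

lemma coset_inj:
  fixes m d s i j :: nat
  defines "K \<equiv> 2^m"
  defines "N \<equiv> (2::nat)^K + 1"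
  assumes s: "s \<in> {1..N-1}" and ij: "i < 2*K" "j < 2*K"
    and eq: "s*2^i mod N = s*2^j mod N"
  shows "i = j"
proof -
  define g where "g = gcd s N"
  define d where "d = N div g"
  define s' where "s' = s div g"
  have Npos: "N > 1" by (simp add: N_def K_def)
  have gpos: "g > 0" using s by (simp add: g_def)
  have Ngd: "N = g * d" by (simp add: d_def g_def)
  have sgs: "s = g * s'" by (simp add: s'_def g_def)
  have "g \<le> s" using s by (simp add: g_def gcd_le1_nat)
  hence "g < N" using s by auto
  have d1: "d > 1"
  proof (rule ccontr)
    assume "\<not> d > 1" hence "d \<le> 1" by simp
    hence "g*d \<le> g" by simp
    with Ngd \<open>g < N\<close> show False by simp
  qed
  have ddvd: "d dvd N" using Ngd by simp
  have cop: "coprime s' d"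
    unfolding s'_def d_def g_def
    by (rule div_gcd_coprime) (use Npos in simp)
  have e1: "s*2^i mod N = g * ((s'*2^i) mod d)"
    unfolding sgs Ngd mult.assoc by (rule mod_mult_mult1)
  have e2: "s*2^j mod N = g * ((s'*2^j) mod d)"
    unfolding sgs Ngd mult.assoc by (rule mod_mult_mult1)
  have "g * ((s'*2^i) mod d) = g * ((s'*2^j) mod d)"
    using eq e1 e2 by simp
  hence "[s'*2^i = s'*2^j] (mod d)" using gpos by (simp add: cong_def)
  hence "[2^i = 2^j] (mod d)" using cong_mult_lcancel_nat[OF cop] by blast
  hence "[i = j] (mod (2*K))" using pow_cong_mod[OF ddvd[unfolded N_def K_def] d1] by (simp add: K_def)
  thus ?thesis using ij cong_less_modulus_unique_nat by blast
qed

lemma coset_eq_image: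
  fixes m s :: nat
  defines "K \<equiv> 2^m"
  defines "N \<equiv> (2::nat)^K + 1"
  shows "cyc_coset 2 N s = (\<lambda>j. s*2^j mod N) ` {..<2*K}"
proof
  show "(\<lambda>j. s*2^j mod N) ` {..<2*K} \<subseteq> cyc_coset 2 N s"
    unfolding cyc_coset_def by auto
next
  show "cyc_coset 2 N s \<subseteq> (\<lambda>j. s*2^j mod N) ` {..<2*K}"
  proof
    fix x assume "x \<in> cyc_coset 2 N s"
    then obtain j where x: "x = s*2^j mod N" unfolding cyc_coset_def by auto
    have Kp: "2*K > 0" by (simp add: K_def)
    have "[j = j mod (2*K)] (mod (2*K))" by (simp add: cong_def)
    hence "[2^j = 2^(j mod (2*K))] (mod N)"
      using pow_cong_mod[of N m j "j mod (2*K)"] by (simp add: N_def K_def)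
    hence "[s*2^j = s*2^(j mod (2*K))] (mod N)" by (rule cong_scalar_left)
    hence "x = s*2^(j mod (2*K)) mod N" using x by (simp add: cong_def)
    moreover have "j mod (2*K) < 2*K" using Kp by simp
    ultimately show "x \<in> (\<lambda>j. s*2^j mod N) ` {..<2*K}" by blast
  qed
qed

lemma coset_card:
  fixes m s :: nat
  defines "K \<equiv> 2^m"
  defines "N \<equiv> (2::nat)^K + 1"
  assumes s: "s \<in> {1..N-1}"
  shows "card (cyc_coset 2 N s) = 2*K"
proof -
  have "inj_on (\<lambda>j. s*2^j mod N) {..<2*K}"
    using coset_inj[of s m] s by (auto simp: inj_on_def K_def N_def)
  thus ?thesis unfolding coset_eq_image[of m s, folded K_def, folded N_def]
    by (simp add: card_image)
qed

lemma coset_sub: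
  fixes m s :: nat
  defines "K \<equiv> 2^m"
  defines "N \<equiv> (2::nat)^K + 1"
  assumes s: "s \<in> {1..N-1}"
  shows "cyc_coset 2 N s \<subseteq> {1..N-1}"
proof
  fix x assume "x \<in> cyc_coset 2 N s"
  then obtain j where x: "x = s*2^j mod N" unfolding cyc_coset_def by auto
  have Npos: "N > 1" by (simp add: N_def K_def)
  have "odd N" by (simp add: N_def K_def)
  hence cop: "coprime N (2^j)" by simp
  have "x \<noteq> 0"
  proof
    assume "x = 0"
    hence "N dvd s * 2^j" using x by (simp add: mod_eq_0_iff_dvd)
    hence "N dvd s" using cop coprime_dvd_mult_left_iff by blast
    with s show False by (auto dest: dvd_imp_le)
  qed
  moreover have "x < N" using x Npos by simp
  ultimately show "x \<in> {1..N-1}" by auto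
qed

lemma coset_shift:
  fixes m s a :: nat
  defines "K \<equiv> 2^m"
  defines "N \<equiv> (2::nat)^K + 1"
  shows "cyc_coset 2 N (s*2^a mod N) = cyc_coset 2 N s"
proof
  show "cyc_coset 2 N (s*2^a mod N) \<subseteq> cyc_coset 2 N s"
  proof
    fix x assume "x \<in> cyc_coset 2 N (s*2^a mod N)"
    then obtain j where x: "x = (s*2^a mod N)*2^j mod N" unfolding cyc_coset_def by auto
    hence "x = s*2^(a+j) mod N" by (simp add: mod_mult_left_eq power_add mult.assoc)
    thus "x \<in> cyc_coset 2 N s" unfolding cyc_coset_def by blast
  qed
next
  show "cyc_coset 2 N s \<subseteq> cyc_coset 2 N (s*2^a mod N)"
  proof
    fix x assume "x \<in> cyc_coset 2 N s"
    then obtain j where x: "x = s*2^j mod N" unfolding cyc_coset_def by auto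
    define j' where "j' = j + 2*K*a - a"
    have "a \<le> 2*K*a" by (simp add: K_def)
    hence aj: "a + j' = j + 2*K*a" unfolding j'_def by linarith
    have "[j + 2*K*a = j] (mod (2*K))" by (simp add: cong_def)
    hence "[2^(j + 2*K*a) = 2^j] (mod N)"
      using pow_cong_mod[of N m "j + 2*K*a" j] by (simp add: N_def K_def)
    hence "[s*2^(a+j') = s*2^j] (mod N)" unfolding aj by (rule cong_scalar_left)
    hence "x = s*2^(a+j') mod N" using x by (simp add: cong_def)
    hence "x = (s*2^a mod N)*2^j' mod N" by (simp add: mod_mult_left_eq power_add mult.assoc)
    thus "x \<in> cyc_coset 2 N (s*2^a mod N)" unfolding cyc_coset_def by blast
  qed
qed

lemma rh:
  fixes m :: nat
  defines "K \<equiv> 2^m"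
  defines "N \<equiv> (2::nat)^K + 1"
  shows "N = r_cos 2 N * h_ord 2 N + 1"
proof -
  define C where "C = cyc_coset 2 N ` {1..N-1}"
  have h: "h_ord 2 N = 2*K" unfolding h_ord_def using ord_fermat_div[of N m]
    by (simp add: N_def K_def)
  have U: "\<Union>C = {1..N-1}"
  proof
    show "\<Union>C \<subseteq> {1..N-1}" unfolding C_def
    proof (rule UN_least)
      fix s assume "s \<in> {1..N-1}"
      thus "cyc_coset 2 N s \<subseteq> {1..N-1}" using coset_sub[of s m] by (simp add: N_def K_def)
    qed
  next
    show "{1..N-1} \<subseteq> \<Union>C"
    proof
      fix s assume s: "s \<in> {1..N-1}"
      moreover have "N > 1" by (simp add: N_def K_def)
      ultimately have "s < N" by auto
      hence "s = s*2^0 mod N" by simp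
      hence "s \<in> cyc_coset 2 N s" unfolding cyc_coset_def by blast
      thus "s \<in> \<Union>C" using s unfolding C_def by blast
    qed
  qed
  have "2*K * card C = card (\<Union>C)"
  proof (rule card_partition)
    show "finite C" by (simp add: C_def)
    show "finite (\<Union>C)" using U by simp
    show "\<And>c. c \<in> C \<Longrightarrow> card c = 2*K"
    proof -
      fix c assume "c \<in> C"
      then obtain s where "s \<in> {1..N-1}" "c = cyc_coset 2 N s" unfolding C_def by blast
      thus "card c = 2*K" using coset_card[of s m] by (simp add: N_def K_def)
    qed
    show "\<And>c1 c2. c1 \<in> C \<Longrightarrow> c2 \<in> C \<Longrightarrow> c1 \<noteq> c2 \<Longrightarrow> c1 \<inter> c2 = {}"
    proof -
      fix c1 c2 assume c: "c1 \<in> C" "c2 \<in> C" "c1 \<noteq> c2"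
      show "c1 \<inter> c2 = {}"
      proof (rule ccontr)
        assume "c1 \<inter> c2 \<noteq> {}"
        then obtain x where x: "x \<in> c1" "x \<in> c2" by blast
        obtain s1 where s1: "c1 = cyc_coset 2 N s1" using c(1) C_def by blast
        obtain s2 where s2: "c2 = cyc_coset 2 N s2" using c(2) C_def by blast
        obtain a1 where "x = s1*2^a1 mod N" using x(1) s1 unfolding cyc_coset_def by auto
        hence "cyc_coset 2 N x = c1" using s1 coset_shift[of m s1 a1] by (simp add: N_def K_def)
        moreover obtain a2 where "x = s2*2^a2 mod N" using x(2) s2 unfolding cyc_coset_def by auto
        hence "cyc_coset 2 N x = c2" using s2 coset_shift[of m s2 a2] by (simp add: N_def K_def)
        ultimately show False using c(3) by simp
      qed
    qed
  qed
  hence "2*K * r_cos 2 N = N - 1" using U by (simp add: r_cos_def C_def)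
  moreover have "N \<ge> 1" by (simp add: N_def)
  ultimately show ?thesis using h by (simp add: mult.commute)
qed

theorem theorem4:
  fixes n :: nat
  assumes "n \<ge> 1"
  shows "primover 2 (2 ^ (2 ^ (n - 1)) + 1)"
proof -
  define N where "N = (2::nat) ^ (2 ^ (n - 1)) + 1"
  have N1: "N > 1" by (simp add: N_def)
  have oddN: "odd N" by (simp add: N_def)
  have "N = r_cos 2 N * h_ord 2 N + 1" using rh[of "n-1"] by (simp add: N_def)
  hence "prime N \<or> overpseudoprime 2 N"
    using N1 oddN by (auto simp: overpseudoprime_def)
  thus ?thesis using N1 by (simp add: primover_def N_def)
qed

end
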